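(* Let $L\ge3$ and $\lambda>0$. Among all $\bm a\in\{0,1\}^L$ with $\mathrm{wt}(\bm a)=1$, the largest eigenvalue of $\hat\Pi^{(\mathrm{ph})}_{\bm a}-\lambda\hat\Pi$ (as an operator on $\mathbb C^L$) is maximized at $\bm a=0100\cdots0$, i.e. at $a_2=1$ and $a_i=0$ for $i\ne2$.
   Context: Work in $\mathbb C^L$ with orthonormal basis $\{|1\rangle,\dots,|L\rangle\}$; $\hat P(|\psi\rangle)=|\psi\rangle\langle\psi|$ and $\delta$ is the Kronecker delta. For $\bm a\in\{0,1\}^L$, $\mathrm{wt}(\bm a)$ is the number of $1$'s. $\hat\Pi$ is the real symmetric tridiagonal $L\times L$ matrix with $\langle i|\hat\Pi|i\rangle=1/2$ for $1\le i\le L$, $\langle i|\hat\Pi|i+1\rangle=\langle i+1|\hat\Pi|i\rangle=-1/(2\sqrt2)$ for $i\in\{1,L-1\}$, and $\langle i|\hat\Pi|i+1\rangle=\langle i+1|\hat\Pi|i\rangle=-1/4$ for $2\le i\le L-2$ (all other entries zero). For $\bm a\in\{0,1\}^L$, $\hat\Pi^{(\mathrm{ph})}_{\bm a}$ is the diagonal operator $$\hat\Pi^{(\mathrm{ph})}_{\bm a}=\delta_{a_2,1}\hat P(|1\rangle)+\sum_{i=2}^{L-1}\frac{\delta_{a_{i-1},1}+\delta_{a_{i+1},1}}{2}\hat P(|i\rangle)+\delta_{a_{L-1},1}\hat P(|L\rangle).$$ *)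

theory Defs
  imports Complex_Main "Jordan_Normal_Form.Char_Poly"
begin

text \<open>Bit strings a in {0,1}^L are functions nat => nat, only the values at indices 1..L matter
  (1-based indexing as in the paper).\<close>

definition is_bitstring :: "nat \<Rightarrow> (nat \<Rightarrow> nat) \<Rightarrow> bool" where
  "is_bitstring L a \<longleftrightarrow> (\<forall>i\<in>{1..L}. a i \<in> {0, 1})"

definition wt :: "nat \<Rightarrow> (nat \<Rightarrow> nat) \<Rightarrow> nat" where
  "wt L a = card {i \<in> {1..L}. a i = 1}"

definition delta :: "nat \<Rightarrow> nat \<Rightarrow> real" where
  "delta x y = (if x = y then 1 else 0)"

definition Pi_entry :: "nat \<Rightarrow> nat \<Rightarrow> nat \<Rightarrow> real" where
  "Pi_entry L i j =
     (if i = j then 1/2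
      else if (j = i + 1 \<and> i \<in> {1, L - 1}) \<or> (i = j + 1 \<and> j \<in> {1, L - 1}) then - 1 / (2 * sqrt 2)
      else if (j = i + 1 \<and> 2 \<le> i \<and> i \<le> L - 2) \<or> (i = j + 1 \<and> 2 \<le> j \<and> j \<le> L - 2) then - 1/4
      else 0)"

definition Piph_diag :: "nat \<Rightarrow> (nat \<Rightarrow> nat) \<Rightarrow> nat \<Rightarrow> real" where
  "Piph_diag L a i =
     (if i = 1 then delta (a 2) 1
      else if 2 \<le> i \<and> i \<le> L - 1 then (delta (a (i - 1)) 1 + delta (a (i + 1)) 1) / 2
      else if i = L then delta (a (L - 1)) 1
      else 0)"

text \<open>The L x L complex matrices (0-based storage: entry (i,j) is <i+1|.|j+1>).\<close>
definition Pi_mat :: "nat \<Rightarrow> complex mat" where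
  "Pi_mat L = mat L L (\<lambda>(i, j). complex_of_real (Pi_entry L (i + 1) (j + 1)))"

definition Piph_mat :: "nat \<Rightarrow> (nat \<Rightarrow> nat) \<Rightarrow> complex mat" where
  "Piph_mat L a = mat L L (\<lambda>(i, j). if i = j then complex_of_real (Piph_diag L a (i + 1)) else 0)"

text \<open>Largest eigenvalue of a Hermitian matrix (all of whose eigenvalues are real).\<close>
definition largest_eigenvalue :: "complex mat \<Rightarrow> real" where
  "largest_eigenvalue A = Max {x :: real. eigenvalue A (complex_of_real x)}"

end

theory Submission
  imports Defs
begin


definition sg :: "nat \<Rightarrow> nat \<Rightarrow> real" where
  "sg L i = (if i = 1 \<or> i = L then 1 else sqrt 2)"

definition gf :: "nat \<Rightarrow> real \<Rightarrow> nat \<Rightarrow> real" where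
  "gf N r t = r ^ t + r ^ (N - t)"

definition absd :: "nat \<Rightarrow> nat \<Rightarrow> nat" where
  "absd i s = (if i \<le> s then s - i else i - s)"

lemma gf_rec:
  assumes r: "0 < r" and t: "1 \<le> t" "t + 1 \<le> N"
  shows "gf N r (t - 1) + gf N r (t + 1) = (r + 1/r) * gf N r t"
proof -
  obtain u where u: "t = Suc u" using t by (cases t) auto
  obtain v where v: "N - t = Suc v" using t by (cases "N - t") auto
  have a: "N - (t - 1) = Suc (Suc v)" using t v by auto
  have b: "N - (t + 1) = v" using t v by auto
  show ?thesis unfolding gf_def a b using r v[unfolded u] by (simp add: u field_simps power2_eq_square)
qed

lemma gf_sym: "t \<le> N \<Longrightarrow> gf N r (N - t) = gf N r t"
  unfolding gf_def by simp

definition kap :: "real \<Rightarrow> nat \<Rightarrow> real \<Rightarrow> real" where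
  "kap lam N r = lam / 4 * ((r + 1 / r) * gf N r 0 - 2 * gf N r 1)"

definition Gm :: "nat \<Rightarrow> real \<Rightarrow> real \<Rightarrow> nat \<Rightarrow> nat \<Rightarrow> real" where
  "Gm L lam r i s = sg L i * sg L s * (gf (2 * (L - 1)) r (absd i s) + gf (2 * (L - 1)) r (i + s - 2))
      / (2 * kap lam (2 * (L - 1)) r)"

definition yfun :: "real \<Rightarrow> real \<Rightarrow> real" where
  "yfun lam r = lam / 4 * (r + 1 / r) - lam / 2"

definition Aent :: "nat \<Rightarrow> real \<Rightarrow> real \<Rightarrow> nat \<Rightarrow> nat \<Rightarrow> real" where
  "Aent L lam y i j = (if i = j then y else 0) + lam * Pi_entry L i j"

lemma kap_eq:
  assumes r: "0 < r" "r < 1" and N: "1 \<le> N"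
  shows "kap lam N r = lam / 4 * ((1 / r - r) * (1 - r ^ N))"
proof -
  obtain M where M: "N = Suc M" using N by (cases N) auto
  show ?thesis unfolding kap_def gf_def M using r by (simp add: field_simps)
qed

lemma kap_pos:
  assumes r: "0 < r" "r < 1" and N: "1 \<le> N" and lam: "lam > 0"
  shows "kap lam N r > 0"
proof -
  have "r ^ N < 1" using r N by (simp add: power_less_one_iff)
  moreover have "r < 1 / r" using r by (simp add: field_simps) (metis less_trans mult_less_cancel_left_pos mult.right_neutral)
  ultimately show ?thesis unfolding kap_eq[OF r N] using lam by simp
qed

lemma Pi_far: "j + 1 < i \<or> i + 1 < j \<Longrightarrow> Pi_entry L i j = 0"
  unfolding Pi_entry_def by auto

lemma Pi_diag: "Pi_entry L i i = 1/2"
  unfolding Pi_entry_def by auto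

lemma Pi_sym: "Pi_entry L i j = Pi_entry L j i"
  unfolding Pi_entry_def by auto

lemma Pi_up: "1 \<le> i \<Longrightarrow> i + 1 \<le> L \<Longrightarrow>
   Pi_entry L i (i + 1) = (if i = 1 \<or> i = L - 1 then - 1 / (2 * sqrt 2) else - 1/4)"
  unfolding Pi_entry_def by auto

lemma sqrt2_sq: "sqrt 2 * sqrt 2 = (2::real)" by simp

lemma sqrt2_sq': "sqrt 2 * (sqrt 2 * x) = 2 * (x::real)"
  by (simp add: mult.assoc[symmetric])

lemma inv_sqrt2: "1 / (2 * sqrt 2) = sqrt 2 / (4::real)"
proof -
  have "sqrt 2 * sqrt 2 = (2::real)" by simp
  thus ?thesis by (simp add: field_simps)
qed

lemma Pi_sg_up: assumes "2 \<le> i" "i + 1 \<le> L"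
  shows "Pi_entry L i (i + 1) * sg L (i + 1) = - sqrt 2 / 4"
proof (cases "i + 1 = L")
  case True
  hence "Pi_entry L i (i + 1) = - 1 / (2 * sqrt 2)" using assms Pi_up[of i L] by auto
  moreover have "sg L (i + 1) = 1" using True unfolding sg_def by auto
  ultimately show ?thesis by (simp add: inv_sqrt2)
next
  case False
  hence "Pi_entry L i (i + 1) = - 1 / 4" using assms Pi_up[of i L] by auto
  moreover have "sg L (i + 1) = sqrt 2" using False assms unfolding sg_def by auto
  ultimately show ?thesis by (simp add: field_simps)
qed

lemma Pi_sg_down: assumes "2 \<le> i" "i + 1 \<le> L"
  shows "Pi_entry L i (i - 1) * sg L (i - 1) = - sqrt 2 / 4"
proof (cases "i = 2")
  case True
  hence "Pi_entry L i (i - 1) = - 1 / (2 * sqrt 2)" using assms by (simp add: Pi_entry_def)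
  moreover have "sg L (i - 1) = 1" using True unfolding sg_def by auto
  ultimately show ?thesis by (simp add: inv_sqrt2)
next
  case False
  have e: "i - 1 + 1 = i" using assms by auto
  hence "Pi_entry L i (i - 1) = - 1 / 4" using False assms Pi_up[of "i - 1" L] Pi_sym[of L i "i - 1"] by auto
  moreover have "sg L (i - 1) = sqrt 2" using False assms unfolding sg_def by auto
  ultimately show ?thesis by (simp add: field_simps)
qed

lemma sum_tri_first:
  fixes f :: "nat \<Rightarrow> 'a::comm_monoid_add" and L :: nat
  assumes L: "2 \<le> L" and f: "\<And>j. 2 < j \<Longrightarrow> f j = 0"
  shows "(\<Sum>j\<in>{1..L}. f j) = f 1 + f 2"
proof -
  have "(\<Sum>j\<in>{1..L}. f j) = (\<Sum>j\<in>{1,2}. f j)"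
    by (rule sum.mono_neutral_right) (use L f in auto)
  thus ?thesis by simp
qed

lemma sum_tri_last:
  fixes f :: "nat \<Rightarrow> 'a::comm_monoid_add" and L :: nat
  assumes L: "2 \<le> L" and f: "\<And>j. j + 1 < L \<Longrightarrow> f j = 0"
  shows "(\<Sum>j\<in>{1..L}. f j) = f (L - 1) + f L"
proof -
  have "(\<Sum>j\<in>{1..L}. f j) = (\<Sum>j\<in>{L - 1, L}. f j)"
  proof (rule sum.mono_neutral_right)
    show "\<forall>j\<in>{1..L} - {L - 1, L}. f j = 0" using L by (auto intro!: f)
  qed (use L in auto)
  thus ?thesis using L by simp
qed

lemma sum_tri_mid:
  fixes f :: "nat \<Rightarrow> 'a::comm_monoid_add" and L :: nat
  assumes i: "2 \<le> i" "i + 1 \<le> L" and f: "\<And>j. j + 1 < i \<or> i + 1 < j \<Longrightarrow> f j = 0"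
  shows "(\<Sum>j\<in>{1..L}. f j) = f (i - 1) + f i + f (i + 1)"
proof -
  have "(\<Sum>j\<in>{1..L}. f j) = (\<Sum>j\<in>{i - 1, i, i + 1}. f j)"
  proof (rule sum.mono_neutral_right)
    show "\<forall>j\<in>{1..L} - {i - 1, i, i + 1}. f j = 0" using i by (auto intro!: f)
  qed (use i in auto)
  moreover have "i - 1 \<notin> {i, i + 1}" using i by auto
  ultimately show ?thesis by (simp add: add.assoc)
qed



lemma K_id: "lam > 0 \<Longrightarrow> (r + 1/r) * gf N r 0 - 2 * gf N r 1 = 4 * kap lam N r / lam"
  unfolding kap_def by (simp add: field_simps)

lemma row_first:
  assumes L: "3 \<le> L" and lam: "lam > 0" and r: "0 < r" "r < 1" and s: "1 \<le> s" "s \<le> L"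
  shows "(\<Sum>j\<in>{1..L}. Aent L lam (yfun lam r) 1 j * Gm L lam r j s) = (if 1 = s then 1 else 0)"
proof -
  define N where "N = 2 * (L - 1)"
  define K where "K = kap lam N r"
  define c where "c = r + 1 / r"
  have K: "K > 0" unfolding K_def using kap_pos[OF r _ lam, of N] L N_def by auto
  have sum: "(\<Sum>j\<in>{1..L}. Aent L lam (yfun lam r) 1 j * Gm L lam r j s)
     = Aent L lam (yfun lam r) 1 1 * Gm L lam r 1 s + Aent L lam (yfun lam r) 1 2 * Gm L lam r 2 s"
    by (rule sum_tri_first) (use L in \<open>auto simp: Aent_def Pi_far\<close>)
  have a1: "Aent L lam (yfun lam r) 1 1 = lam / 4 * c"
    unfolding Aent_def yfun_def c_def by (simp add: Pi_diag)
  have a2: "Aent L lam (yfun lam r) 1 2 = - lam * sqrt 2 / 4"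
    unfolding Aent_def Pi_entry_def using L by (simp add: inv_sqrt2)
  have g1: "Gm L lam r 1 s = sg L s * (2 * gf N r (s - 1)) / (2 * K)"
    unfolding Gm_def N_def[symmetric] K_def[symmetric] using s by (simp add: sg_def absd_def)
  have g2: "Gm L lam r 2 s = sqrt 2 * sg L s * (gf N r (absd 2 s) + gf N r s) / (2 * K)"
    unfolding Gm_def N_def[symmetric] K_def[symmetric] using s L by (simp add: sg_def)
  have main: "(\<Sum>j\<in>{1..L}. Aent L lam (yfun lam r) 1 j * Gm L lam r j s)
     = sg L s * lam / (4 * K) * (c * gf N r (s - 1) - gf N r (absd 2 s) - gf N r s)"
    unfolding sum a1 a2 g1 g2 using K by (simp add: field_simps sqrt2_sq sqrt2_sq')
  show ?thesis
  proof (cases "s = 1")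
    case True
    have "c * gf N r 0 - gf N r 1 - gf N r 1 = 4 * K / lam"
      using K_id[OF lam, of r N] unfolding c_def K_def by simp
    thus ?thesis unfolding main using True K lam by (simp add: sg_def absd_def)
  next
    case False
    have "gf N r (s - 1 - 1) + gf N r (s - 1 + 1) = c * gf N r (s - 1)"
      unfolding c_def by (rule gf_rec) (use r s False L N_def in auto)
    moreover have "absd 2 s = s - 1 - 1" "s - 1 + 1 = s" using s False by (auto simp: absd_def)
    ultimately show ?thesis unfolding main using False by simp
  qed
qed

lemma row_last:
  assumes L: "3 \<le> L" and lam: "lam > 0" and r: "0 < r" "r < 1" and s: "1 \<le> s" "s \<le> L"
  shows "(\<Sum>j\<in>{1..L}. Aent L lam (yfun lam r) L j * Gm L lam r j s) = (if L = s then 1 else 0)"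
proof -
  define N where "N = 2 * (L - 1)"
  define K where "K = kap lam N r"
  define c where "c = r + 1 / r"
  have K: "K > 0" unfolding K_def using kap_pos[OF r _ lam, of N] L N_def by auto
  have sum: "(\<Sum>j\<in>{1..L}. Aent L lam (yfun lam r) L j * Gm L lam r j s)
     = Aent L lam (yfun lam r) L (L - 1) * Gm L lam r (L - 1) s + Aent L lam (yfun lam r) L L * Gm L lam r L s"
    by (rule sum_tri_last) (use L in \<open>auto simp: Aent_def Pi_far\<close>)
  have a1: "Aent L lam (yfun lam r) L L = lam / 4 * c"
    unfolding Aent_def yfun_def c_def by (simp add: Pi_diag)
  have a2: "Aent L lam (yfun lam r) L (L - 1) = - lam * sqrt 2 / 4"
  proof -
    have "Pi_entry L (L - 1) (L - 1 + 1) = - 1 / (2 * sqrt 2)" using Pi_up[of "L - 1" L] L by simp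
    hence "Pi_entry L L (L - 1) = - 1 / (2 * sqrt 2)" using L Pi_sym[of L L "L - 1"] by simp
    thus ?thesis unfolding Aent_def using L by (simp add: inv_sqrt2)
  qed
  have e1: "gf N r (L + s - 2) = gf N r (L - s)"
  proof -
    have "N - (L - s) = L + s - 2" unfolding N_def using s L by auto
    thus ?thesis using gf_sym[of "L - s" N r] s L unfolding N_def by auto
  qed
  have g1: "Gm L lam r L s = sg L s * (2 * gf N r (L - s)) / (2 * K)"
    unfolding Gm_def N_def[symmetric] K_def[symmetric] using s e1 by (simp add: sg_def absd_def)
  have e2: "gf N r (L - 1 + s - 2) = gf N r (L - s + 1)"
  proof -
    have "N - (L - s + 1) = L - 1 + s - 2" unfolding N_def using s L by auto
    thus ?thesis using gf_sym[of "L - s + 1" N r] s L unfolding N_def by auto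
  qed
  have g2: "Gm L lam r (L - 1) s = sqrt 2 * sg L s * (gf N r (absd (L - 1) s) + gf N r (L - s + 1)) / (2 * K)"
  proof -
    have "L - 1 \<noteq> 1" "L - 1 \<noteq> L" using L by arith+
    hence "sg L (L - 1) = sqrt 2" by (simp add: sg_def)
    thus ?thesis unfolding Gm_def N_def[symmetric] K_def[symmetric] e2 using s L by simp
  qed
  have main: "(\<Sum>j\<in>{1..L}. Aent L lam (yfun lam r) L j * Gm L lam r j s)
     = sg L s * lam / (4 * K) * (c * gf N r (L - s) - gf N r (absd (L - 1) s) - gf N r (L - s + 1))"
    unfolding sum a1 a2 g1 g2 using K by (simp add: field_simps sqrt2_sq sqrt2_sq')
  show ?thesis
  proof (cases "s = L")
    case True
    have "c * gf N r 0 - gf N r 1 - gf N r 1 = 4 * K / lam"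
      using K_id[OF lam, of r N] unfolding c_def K_def by simp
    moreover have "absd (L - 1) s = 1" using True L by (simp add: absd_def)
    ultimately show ?thesis unfolding main using True K lam L by (simp add: sg_def)
  next
    case False
    have "gf N r (L - s - 1) + gf N r (L - s + 1) = c * gf N r (L - s)"
      unfolding c_def by (rule gf_rec) (use r s False L N_def in auto)
    moreover have "absd (L - 1) s = L - s - 1" using s False by (auto simp: absd_def)
    ultimately show ?thesis unfolding main using False by simp
  qed
qed



lemma row_mid:
  assumes L: "3 \<le> L" and lam: "lam > 0" and r: "0 < r" "r < 1" and s: "1 \<le> s" "s \<le> L"
    and i: "2 \<le> i" "i + 1 \<le> L"
  shows "(\<Sum>j\<in>{1..L}. Aent L lam (yfun lam r) i j * Gm L lam r j s) = (if i = s then 1 else 0)"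
proof -
  define N where "N = 2 * (L - 1)"
  define K where "K = kap lam N r"
  define c where "c = r + 1 / r"
  have K: "K > 0" unfolding K_def using kap_pos[OF r _ lam, of N] L N_def by auto
  have sum: "(\<Sum>j\<in>{1..L}. Aent L lam (yfun lam r) i j * Gm L lam r j s)
     = Aent L lam (yfun lam r) i (i - 1) * Gm L lam r (i - 1) s + Aent L lam (yfun lam r) i i * Gm L lam r i s
       + Aent L lam (yfun lam r) i (i + 1) * Gm L lam r (i + 1) s"
    by (rule sum_tri_mid) (use i in \<open>auto simp: Aent_def Pi_far\<close>)
  have a1: "Aent L lam (yfun lam r) i i = lam / 4 * c"
    unfolding Aent_def yfun_def c_def by (simp add: Pi_diag)
  have sgi: "sg L i = sqrt 2" using i unfolding sg_def by auto
  have e1: "i - 1 + s - 2 = i + s - 2 - 1" "i + 1 + s - 2 = i + s - 2 + 1" using i s by auto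
  have t1: "Aent L lam (yfun lam r) i (i - 1) * Gm L lam r (i - 1) s
      = - lam * sqrt 2 / 4 * sg L s * (gf N r (absd (i - 1) s) + gf N r (i + s - 2 - 1)) / (2 * K)"
  proof -
    have "Aent L lam (yfun lam r) i (i - 1) * Gm L lam r (i - 1) s
      = lam * (Pi_entry L i (i - 1) * sg L (i - 1)) * sg L s * (gf N r (absd (i - 1) s) + gf N r (i - 1 + s - 2)) / (2 * K)"
      unfolding Aent_def Gm_def N_def[symmetric] K_def[symmetric] using i by simp
    thus ?thesis unfolding Pi_sg_down[OF i] e1 by simp
  qed
  have t3: "Aent L lam (yfun lam r) i (i + 1) * Gm L lam r (i + 1) s
      = - lam * sqrt 2 / 4 * sg L s * (gf N r (absd (i + 1) s) + gf N r (i + s - 2 + 1)) / (2 * K)"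
  proof -
    have "Aent L lam (yfun lam r) i (i + 1) * Gm L lam r (i + 1) s
      = lam * (Pi_entry L i (i + 1) * sg L (i + 1)) * sg L s * (gf N r (absd (i + 1) s) + gf N r (i + 1 + s - 2)) / (2 * K)"
      unfolding Aent_def Gm_def N_def[symmetric] K_def[symmetric] using i by simp
    thus ?thesis unfolding Pi_sg_up[OF i] e1 by simp
  qed
  have g2: "Gm L lam r i s = sqrt 2 * sg L s * (gf N r (absd i s) + gf N r (i + s - 2)) / (2 * K)"
    unfolding Gm_def N_def[symmetric] K_def[symmetric] sgi by simp
  have rec1: "gf N r (i + s - 2 - 1) + gf N r (i + s - 2 + 1) = c * gf N r (i + s - 2)"
    unfolding c_def by (rule gf_rec) (use r s i L N_def in auto)
  have main: "(\<Sum>j\<in>{1..L}. Aent L lam (yfun lam r) i j * Gm L lam r j s)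
     = lam * sqrt 2 * sg L s / (8 * K) * (c * gf N r (absd i s) - gf N r (absd (i - 1) s) - gf N r (absd (i + 1) s))"
  proof -
    have "(\<Sum>j\<in>{1..L}. Aent L lam (yfun lam r) i j * Gm L lam r j s)
     = lam * sqrt 2 * sg L s / (8 * K) * (c * gf N r (absd i s) - gf N r (absd (i - 1) s) - gf N r (absd (i + 1) s))
       + lam * sqrt 2 * sg L s / (8 * K) * (c * gf N r (i + s - 2) - (gf N r (i + s - 2 - 1) + gf N r (i + s - 2 + 1)))"
      unfolding sum a1 t1 t3 g2 using K by (simp add: field_simps)
    thus ?thesis unfolding rec1 by simp
  qed
  consider (eq) "i = s" | (lt) "i < s" | (gt) "s < i" by linarith
  thus ?thesis
  proof cases
    case eq
    have "c * gf N r 0 - gf N r 1 - gf N r 1 = 4 * K / lam"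
      using K_id[OF lam, of r N] unfolding c_def K_def by simp
    moreover have "absd i s = 0" "absd (i - 1) s = 1" "absd (i + 1) s = 1" using eq i by (auto simp: absd_def)
    ultimately have "(\<Sum>j\<in>{1..L}. Aent L lam (yfun lam r) i j * Gm L lam r j s) = sqrt 2 * sqrt 2 / 2"
      unfolding main using K lam eq sgi by (simp add: field_simps)
    thus ?thesis using eq by simp
  next
    case lt
    have "gf N r (s - i - 1) + gf N r (s - i + 1) = c * gf N r (s - i)"
      unfolding c_def by (rule gf_rec) (use r s i lt L N_def in auto)
    moreover have "absd i s = s - i" "absd (i - 1) s = s - i + 1" "absd (i + 1) s = s - i - 1"
      using lt i by (auto simp: absd_def)
    ultimately show ?thesis unfolding main using lt by simp
  next
    case gt
    have "gf N r (i - s - 1) + gf N r (i - s + 1) = c * gf N r (i - s)"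
      unfolding c_def by (rule gf_rec) (use r s i gt L N_def in auto)
    moreover have "absd i s = i - s" "absd (i - 1) s = i - s - 1" "absd (i + 1) s = i - s + 1"
      using gt i by (auto simp: absd_def)
    ultimately show ?thesis unfolding main using gt by simp
  qed
qed

lemma row_all:
  assumes L: "3 \<le> L" and lam: "lam > 0" and r: "0 < r" "r < 1" and s: "1 \<le> s" "s \<le> L"
    and i: "1 \<le> i" "i \<le> L"
  shows "(\<Sum>j\<in>{1..L}. Aent L lam (yfun lam r) i j * Gm L lam r j s) = (if i = s then 1 else 0)"
proof -
  consider "i = 1" | "i = L" | "2 \<le> i \<and> i + 1 \<le> L" using i by linarith
  thus ?thesis
    by cases (use row_first[OF L lam r s] row_last[OF L lam r s] row_mid[OF L lam r s] in auto)
qed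



lemma absd_sym: "absd i j = absd j i" unfolding absd_def by auto

lemma Gm_sym: "Gm L lam r i j = Gm L lam r j i"
  unfolding Gm_def by (simp add: absd_sym add.commute mult.commute)

lemma Aent_sym: "Aent L lam y i j = Aent L lam y j i"
  unfolding Aent_def using Pi_sym by auto

lemma green_identity:
  assumes L: "3 \<le> L" and lam: "lam > 0" and r: "0 < r" "r < 1"
    and eq: "\<And>i. i \<in> {1..L} \<Longrightarrow> (\<Sum>j\<in>{1..L}. Aent L lam (yfun lam r) i j * w j) = D i * w i"
    and s: "s \<in> {1..L}"
  shows "w s = (\<Sum>t\<in>{1..L}. Gm L lam r s t * D t * w t)"
proof -
  have "(\<Sum>i\<in>{1..L}. (if i = s then 1 else 0) * w i) = (\<Sum>i\<in>{1..L}. if i = s then w i else 0)"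
    by (rule sum.cong) auto
  hence "w s = (\<Sum>i\<in>{1..L}. (if i = s then 1 else 0) * w i)"
    using s by simp
  also have "\<dots> = (\<Sum>i\<in>{1..L}. (\<Sum>j\<in>{1..L}. Aent L lam (yfun lam r) i j * Gm L lam r j s) * w i)"
    by (rule sum.cong) (use row_all[OF L lam r] s in auto)
  also have "\<dots> = (\<Sum>i\<in>{1..L}. \<Sum>j\<in>{1..L}. Gm L lam r j s * (Aent L lam (yfun lam r) j i * w i))"
    by (simp add: sum_distrib_left sum_distrib_right Aent_sym mult_ac)
  also have "\<dots> = (\<Sum>j\<in>{1..L}. \<Sum>i\<in>{1..L}. Gm L lam r j s * (Aent L lam (yfun lam r) j i * w i))"
    by (rule sum.swap)
  also have "\<dots> = (\<Sum>j\<in>{1..L}. Gm L lam r j s * (D j * w j))"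
  proof (rule sum.cong)
    fix j assume j: "j \<in> {1..L}"
    have "(\<Sum>i\<in>{1..L}. Aent L lam (yfun lam r) j i * w i) = D j * w j" by (rule eq[OF j])
    thus "(\<Sum>i\<in>{1..L}. Gm L lam r j s * (Aent L lam (yfun lam r) j i * w i)) = Gm L lam r j s * (D j * w j)"
      by (simp add: sum_distrib_left[symmetric])
  qed simp
  finally show ?thesis by (simp add: Gm_sym mult_ac)
qed

lemma gf_mono_basic:
  assumes r: "0 < r" "r < 1" and at: "a \<le> t" "t + a \<le> N"
  shows "gf N r t \<le> gf N r a"
proof -
  define d where "d = t - a"
  define e where "e = N - t - a"
  have t: "t = a + d" and Nt: "N - t = a + e" and Na: "N - a = a + (d + e)"
    using at unfolding d_def e_def by auto
  have "gf N r a - gf N r t = r ^ a * ((1 - r ^ d) * (1 - r ^ e))"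
    by (simp only: gf_def Nt Na) (simp add: t power_add algebra_simps)
  moreover have "r ^ d \<le> 1" "r ^ e \<le> 1" using r by (auto intro: power_le_one)
  ultimately have "gf N r a - gf N r t \<ge> 0" using r by simp
  thus ?thesis by simp
qed

lemma gf_sym_min: "t \<le> N \<Longrightarrow> gf N r t = gf N r (min t (N - t))"
  using gf_sym[of t N r] by (simp add: min_def)

lemma gf_mono:
  assumes r: "0 < r" "r < 1" and a: "a \<le> N" and t: "t \<le> N"
    and m: "min a (N - a) \<le> min t (N - t)"
  shows "gf N r t \<le> gf N r a"
  using gf_mono_basic[OF r, of "min a (N - a)" "min t (N - t)" N] gf_sym_min[OF a] gf_sym_min[OF t] m a t
  by auto

lemma gf_pos: "0 < r \<Longrightarrow> 0 < gf N r t" unfolding gf_def by (intro add_pos_pos zero_less_power)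

lemma gf_le2: "0 < r \<Longrightarrow> r < 1 \<Longrightarrow> gf N r t \<le> 2"
proof -
  assume r: "0 < r" "r < 1"
  have "r ^ t \<le> 1" "r ^ (N - t) \<le> 1" using r by (auto intro: power_le_one)
  thus ?thesis unfolding gf_def by simp
qed



definition dval :: "nat \<Rightarrow> nat \<Rightarrow> nat \<Rightarrow> real" where
  "dval L k t = (if (t + 1 = k \<or> t = k + 1) \<and> 1 \<le> t \<and> t \<le> L then 1 / (sg L t)\<^sup>2 else 0)"

definition Pq :: "nat \<Rightarrow> real \<Rightarrow> nat \<Rightarrow> nat \<Rightarrow> real" where
  "Pq L r s t = gf (2 * (L - 1)) r (absd s t) + gf (2 * (L - 1)) r (s + t - 2)"

definition supp :: "nat \<Rightarrow> nat \<Rightarrow> nat set" where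
  "supp L k = {t \<in> {1..L}. t + 1 = k \<or> t = k + 1}"

lemma sg_pos: "sg L t > 0" unfolding sg_def by auto

lemma Gm_Pq: "Gm L lam r s t = sg L s * sg L t * Pq L r s t / (2 * kap lam (2 * (L - 1)) r)"
  unfolding Gm_def Pq_def by simp

lemma q_identity:
  assumes L: "3 \<le> L" and lam: "lam > 0" and r: "0 < r" "r < 1"
    and eq: "\<And>i. i \<in> {1..L} \<Longrightarrow> (\<Sum>j\<in>{1..L}. Aent L lam (yfun lam r) i j * w j) = dval L k i * w i"
    and s: "s \<in> {1..L}"
  shows "w s / sg L s = (\<Sum>t\<in>supp L k. Pq L r s t / (2 * kap lam (2 * (L - 1)) r) * (w t / sg L t))"
proof -
  define K where "K = kap lam (2 * (L - 1)) r"
  have "w s = (\<Sum>t\<in>{1..L}. Gm L lam r s t * dval L k t * w t)"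
    by (rule green_identity[OF L lam r eq s])
  hence "w s / sg L s = (\<Sum>t\<in>{1..L}. Gm L lam r s t * dval L k t * w t / sg L s)"
    by (simp add: sum_divide_distrib)
  also have "\<dots> = (\<Sum>t\<in>{1..L}. if t \<in> supp L k then Pq L r s t / (2 * K) * (w t / sg L t) else 0)"
  proof (rule sum.cong)
    fix t assume t: "t \<in> {1..L}"
    have sp: "sg L s > 0" "sg L t > 0" using sg_pos by auto
    show "Gm L lam r s t * dval L k t * w t / sg L s
      = (if t \<in> supp L k then Pq L r s t / (2 * K) * (w t / sg L t) else 0)"
      unfolding Gm_Pq K_def[symmetric] dval_def supp_def using t sp
      by (auto simp: field_simps power2_eq_square)
  qed simp
  also have "\<dots> = (\<Sum>t\<in>supp L k. Pq L r s t / (2 * K) * (w t / sg L t))"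
    by (rule sum.mono_neutral_cong_right) (auto simp: supp_def)
  finally show ?thesis unfolding K_def .
qed

lemma zero_from_supp:
  assumes L: "3 \<le> L" and lam: "lam > 0" and r: "0 < r" "r < 1"
    and eq: "\<And>i. i \<in> {1..L} \<Longrightarrow> (\<Sum>j\<in>{1..L}. Aent L lam (yfun lam r) i j * w j) = dval L k i * w i"
    and z: "\<forall>t\<in>supp L k. w t = 0"
    and s: "s \<in> {1..L}"
  shows "w s = 0"
proof -
  have "w s = (\<Sum>t\<in>{1..L}. Gm L lam r s t * dval L k t * w t)"
    by (rule green_identity[OF L lam r eq s])
  also have "\<dots> = 0"
    by (rule sum.neutral) (use z in \<open>auto simp: dval_def supp_def\<close>)
  finally show ?thesis .
qed

definition form2 :: "real \<Rightarrow> real \<Rightarrow> real \<Rightarrow> real \<Rightarrow> real \<Rightarrow> real" where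
  "form2 a b c x y = a * x\<^sup>2 + 2 * b * x * y + c * y\<^sup>2"

lemma two_site:
  assumes k2: "k2 > 0"
    and e1: "qa = pa / k2 * qa + pab / k2 * qb" and e2: "qb = pab / k2 * qa + pb / k2 * qb"
    and pab: "pab \<ge> 0"
  shows "k2 * ((abs qa)\<^sup>2 + (abs qb)\<^sup>2) \<le> form2 pa pab pb (abs qa) (abs qb)"
proof -
  have f1: "k2 * qa = pa * qa + pab * qb" using e1 k2 by (simp add: field_simps)
  have f2: "k2 * qb = pab * qa + pb * qb" using e2 k2 by (simp add: field_simps)
  have "k2 * (qa\<^sup>2 + qb\<^sup>2) = pa * qa\<^sup>2 + 2 * pab * qa * qb + pb * qb\<^sup>2"
  proof -
    have "k2 * (qa\<^sup>2 + qb\<^sup>2) = (k2 * qa) * qa + (k2 * qb) * qb" by (simp add: power2_eq_square algebra_simps)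
    also have "\<dots> = pa * qa\<^sup>2 + 2 * pab * qa * qb + pb * qb\<^sup>2"
      unfolding f1 f2 by (simp add: power2_eq_square algebra_simps)
    finally show ?thesis .
  qed
  moreover have "pab * (qa * qb) \<le> pab * ((abs qa) * (abs qb))"
    using pab by (intro mult_left_mono) (auto simp: abs_mult[symmetric])
  ultimately show ?thesis unfolding form2_def by (simp add: algebra_simps)
qed



lemma form2_mono:
  assumes "A \<le> A'" "B \<le> B'" "C \<le> C'" "x \<ge> 0" "y \<ge> 0"
  shows "form2 A B C x y \<le> form2 A' B' C' x y"
proof -
  have "A * x\<^sup>2 \<le> A' * x\<^sup>2" using assms by (intro mult_right_mono) auto
  moreover have "B * (x * y) \<le> B' * (x * y)" using assms by (intro mult_right_mono) auto
  moreover have "C * y\<^sup>2 \<le> C' * y\<^sup>2" using assms by (intro mult_right_mono) auto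
  ultimately show ?thesis unfolding form2_def by (simp add: algebra_simps)
qed

lemma form2_swap: "form2 A B C x y = form2 C B A y x"
  unfolding form2_def by (simp add: algebra_simps)

lemma config_z:
  assumes L: "3 \<le> L" and lam: "lam > 0" and r: "0 < r" "r < 1" and k: "1 \<le> k" "k \<le> L" "k \<noteq> 2"
    and eq: "\<And>i. i \<in> {1..L} \<Longrightarrow> (\<Sum>j\<in>{1..L}. Aent L lam (yfun lam r) i j * w j) = dval L k i * w i"
    and nz: "\<exists>s\<in>{1..L}. w s \<noteq> 0"
  shows "\<exists>z1 z3. (z1 \<noteq> 0 \<or> z3 \<noteq> 0) \<and>
     2 * kap lam (2 * (L - 1)) r * (z1\<^sup>2 + z3\<^sup>2) \<le> form2 (Pq L r 1 1) (Pq L r 1 3) (Pq L r 3 3) z1 z3"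
proof -
  define N where "N = 2 * (L - 1)"
  define K where "K = kap lam N r"
  define g where "g = gf N r"
  have K: "K > 0" unfolding K_def using kap_pos[OF r _ lam, of N] L N_def by auto
  have N4: "4 \<le> N" using L N_def by auto
  have mono: "\<And>a t. a \<le> t \<Longrightarrow> t + a \<le> N \<Longrightarrow> g t \<le> g a"
    unfolding g_def by (rule gf_mono_basic[OF r])
  have g0: "\<And>t. t \<le> N \<Longrightarrow> g t \<le> g 0" by (rule mono) auto
  have P11: "Pq L r 1 1 = 2 * g 0" unfolding Pq_def g_def N_def absd_def by simp
  have P13: "Pq L r 1 3 = 2 * g 2" unfolding Pq_def g_def N_def absd_def by simp
  have P33: "Pq L r 3 3 = g 0 + g 4" unfolding Pq_def g_def N_def absd_def by simp
  have gpos: "\<And>t. g t > 0" unfolding g_def using gf_pos r by auto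
  have qid: "\<And>s. s \<in> {1..L} \<Longrightarrow> w s / sg L s = (\<Sum>t\<in>supp L k. Pq L r s t / (2 * K) * (w t / sg L t))"
    unfolding K_def N_def by (rule q_identity[OF L lam r eq])
  obtain t0 where t0: "t0 \<in> supp L k" "w t0 \<noteq> 0"
    using zero_from_supp[OF L lam r eq] nz by blast
  consider (one) "k = 1" | (last) "k = L" | (mid) "3 \<le> k" "k + 1 \<le> L" using k by linarith
  thus ?thesis
  proof cases
    case one
    have S: "supp L k = {2}" using one L unfolding supp_def by auto
    have w2: "w 2 \<noteq> 0" using t0 S by auto
    have "w 2 / sg L 2 = (\<Sum>t\<in>supp L k. Pq L r 2 t / (2 * K) * (w t / sg L t))"
      by (rule qid) (use L in auto)
    also have "\<dots> = Pq L r 2 2 / (2 * K) * (w 2 / sg L 2)" unfolding S by simp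
    finally have "w 2 / sg L 2 = Pq L r 2 2 / (2 * K) * (w 2 / sg L 2)" .
    hence "2 * K = Pq L r 2 2" using w2 K sg_pos[of L 2] by (simp add: field_simps)
    also have "\<dots> = g 0 + g 2" unfolding Pq_def g_def N_def absd_def by simp
    also have "\<dots> \<le> 2 * g 0" using g0[of 2] N4 by simp
    finally have "2 * K * (1\<^sup>2 + 0\<^sup>2) \<le> form2 (Pq L r 1 1) (Pq L r 1 3) (Pq L r 3 3) 1 0"
      unfolding form2_def P11 by simp
    thus ?thesis unfolding K_def N_def by (intro exI[of _ 1] exI[of _ 0]) simp
  next
    case last
    have S: "supp L k = {L - 1}" using last L unfolding supp_def by auto
    have w2: "w (L - 1) \<noteq> 0" using t0 S by auto
    have "w (L - 1) / sg L (L - 1) = (\<Sum>t\<in>supp L k. Pq L r (L - 1) t / (2 * K) * (w t / sg L t))"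
      by (rule qid) (use L in auto)
    also have "\<dots> = Pq L r (L - 1) (L - 1) / (2 * K) * (w (L - 1) / sg L (L - 1))" unfolding S by simp
    finally have "w (L - 1) / sg L (L - 1) = Pq L r (L - 1) (L - 1) / (2 * K) * (w (L - 1) / sg L (L - 1))" .
    hence "2 * K = Pq L r (L - 1) (L - 1)" using w2 K sg_pos[of L "L - 1"] by (simp add: field_simps)
    also have "\<dots> = g 0 + g (2 * L - 4)"
    proof -
      have ee: "L - 1 + (L - 1) - 2 = 2 * L - 4" using L by arith
      show ?thesis unfolding Pq_def g_def N_def absd_def ee by simp
    qed
    also have "\<dots> \<le> 2 * g 0" using g0[of "2 * L - 4"] N_def by simp
    finally have "2 * K * (1\<^sup>2 + 0\<^sup>2) \<le> form2 (Pq L r 1 1) (Pq L r 1 3) (Pq L r 3 3) 1 0"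
      unfolding form2_def P11 by simp
    thus ?thesis unfolding K_def N_def by (intro exI[of _ 1] exI[of _ 0]) simp
  next
    case mid
    have S: "supp L k = {k - 1, k + 1}" using mid L unfolding supp_def by auto
    have ne: "k - 1 \<noteq> k + 1" by simp
    define A where "A = Pq L r (k - 1) (k - 1)"
    define B where "B = Pq L r (k - 1) (k + 1)"
    define C where "C = Pq L r (k + 1) (k + 1)"
    have A: "A = g 0 + g (2 * k - 4)"
    proof -
      have ee: "k - 1 + (k - 1) - 2 = 2 * k - 4" using mid by arith
      show ?thesis unfolding A_def Pq_def g_def N_def absd_def ee by simp
    qed
    have B: "B = g 2 + g (2 * k - 2)"
    proof -
      have ee: "k - 1 + (k + 1) - 2 = 2 * k - 2" "absd (k - 1) (k + 1) = 2" using mid by (auto simp: absd_def)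
      show ?thesis unfolding B_def Pq_def g_def N_def ee by simp
    qed
    have C: "C = g 0 + g (2 * k)"
    proof -
      have ee: "k + 1 + (k + 1) - 2 = 2 * k" "absd (k + 1) (k + 1) = 0" using mid by (auto simp: absd_def)
      show ?thesis unfolding C_def Pq_def g_def N_def ee by simp
    qed
    have BA: "Pq L r (k + 1) (k - 1) = B" unfolding B_def Pq_def by (simp add: absd_sym add.commute)
    define u1 where "u1 = w (k - 1) / sg L (k - 1)"
    define u2 where "u2 = w (k + 1) / sg L (k + 1)"
    have "u1 = (\<Sum>t\<in>supp L k. Pq L r (k - 1) t / (2 * K) * (w t / sg L t))"
      unfolding u1_def by (rule qid) (use mid in auto)
    also have "\<dots> = A / (2 * K) * u1 + B / (2 * K) * u2"
      unfolding S using ne by (simp add: u1_def u2_def A_def B_def)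
    finally have e1: "u1 = A / (2 * K) * u1 + B / (2 * K) * u2" .
    have "u2 = (\<Sum>t\<in>supp L k. Pq L r (k + 1) t / (2 * K) * (w t / sg L t))"
      unfolding u2_def by (rule qid) (use mid in auto)
    also have "\<dots> = B / (2 * K) * u1 + C / (2 * K) * u2"
      unfolding S using ne by (simp add: u1_def u2_def C_def BA[symmetric])
    finally have e2: "u2 = B / (2 * K) * u1 + C / (2 * K) * u2" .
    have Bpos: "B \<ge> 0" using B gpos by (simp add: add_nonneg_nonneg less_imp_le)
    have ineq: "2 * K * ((abs u1)\<^sup>2 + (abs u2)\<^sup>2) \<le> form2 A B C (abs u1) (abs u2)"
      by (rule two_site) (use K e1 e2 Bpos in auto)
    have "t0 = k - 1 \<or> t0 = k + 1" using t0 S by auto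
    hence unz: "(abs u1) \<noteq> 0 \<or> (abs u2) \<noteq> 0"
      by (elim disjE) (use t0(2) sg_pos[of L t0] in \<open>auto simp: u1_def u2_def\<close>)
    have "g (2 * k - 2) \<le> g 2" by (rule mono) (use mid N_def in auto)
    hence B2: "B \<le> 2 * g 2" unfolding B by simp
    have C0: "C \<le> 2 * g 0" unfolding C using g0[of "2 * k"] mid N_def by simp
    have A0: "A \<le> 2 * g 0" unfolding A using g0[of "2 * k - 4"] mid N_def by simp
    consider (d) "k + 3 \<le> L" | (sw) "4 \<le> k" | (sp) "k = 3" "L = 5" | (sp4) "k = 3" "L = 4"
      using mid by linarith
    thus ?thesis
    proof cases
      case d
      have "g (2 * k) \<le> g 4" by (rule mono) (use mid d N_def in auto)
      hence "C \<le> g 0 + g 4" unfolding C by simp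
      hence "form2 A B C (abs u1) (abs u2) \<le> form2 (Pq L r 1 1) (Pq L r 1 3) (Pq L r 3 3) (abs u1) (abs u2)"
        unfolding P11 P13 P33 using A0 B2 by (intro form2_mono) auto
      hence "2 * K * ((abs u1)\<^sup>2 + (abs u2)\<^sup>2) \<le> form2 (Pq L r 1 1) (Pq L r 1 3) (Pq L r 3 3) (abs u1) (abs u2)"
        using ineq by linarith
      thus ?thesis using unz unfolding K_def N_def by blast
    next
      case sw
      have "g (2 * k - 4) \<le> g 4" by (rule mono) (use mid sw N_def in auto)
      hence "A \<le> g 0 + g 4" unfolding A by simp
      hence "form2 C B A (abs u2) (abs u1) \<le> form2 (Pq L r 1 1) (Pq L r 1 3) (Pq L r 3 3) (abs u2) (abs u1)"
        unfolding P11 P13 P33 using C0 B2 by (intro form2_mono) auto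
      hence "form2 A B C (abs u1) (abs u2) \<le> form2 (Pq L r 1 1) (Pq L r 1 3) (Pq L r 3 3) (abs u2) (abs u1)"
        using form2_swap by metis
      hence "2 * K * ((abs u2)\<^sup>2 + (abs u1)\<^sup>2) \<le> form2 (Pq L r 1 1) (Pq L r 1 3) (Pq L r 3 3) (abs u2) (abs u1)"
      proof -
        have "2 * K * ((abs u2)\<^sup>2 + (abs u1)\<^sup>2) = 2 * K * ((abs u1)\<^sup>2 + (abs u2)\<^sup>2)" by (simp add: add.commute)
        thus ?thesis using ineq \<open>form2 A B C (abs u1) (abs u2) \<le> _\<close> by linarith
      qed
      moreover have "(abs u2) \<noteq> 0 \<or> (abs u1) \<noteq> 0" using unz by blast
      ultimately show ?thesis unfolding K_def N_def by blast
    next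
      case sp4
      have N6: "N = 6" using sp4 N_def by simp
      have "g 4 = g 2" using gf_sym[of 2 N r] N6 unfolding g_def by simp
      hence "A \<le> g 0 + g 4" unfolding A using sp4 by simp
      hence "form2 C B A (abs u2) (abs u1) \<le> form2 (Pq L r 1 1) (Pq L r 1 3) (Pq L r 3 3) (abs u2) (abs u1)"
        unfolding P11 P13 P33 using C0 B2 by (intro form2_mono) auto
      hence "form2 A B C (abs u1) (abs u2) \<le> form2 (Pq L r 1 1) (Pq L r 1 3) (Pq L r 3 3) (abs u2) (abs u1)"
        using form2_swap by metis
      hence "2 * K * ((abs u2)\<^sup>2 + (abs u1)\<^sup>2) \<le> form2 (Pq L r 1 1) (Pq L r 1 3) (Pq L r 3 3) (abs u2) (abs u1)"
      proof -
        have "2 * K * ((abs u2)\<^sup>2 + (abs u1)\<^sup>2) = 2 * K * ((abs u1)\<^sup>2 + (abs u2)\<^sup>2)" by (simp add: add.commute)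
        thus ?thesis using ineq \<open>form2 A B C (abs u1) (abs u2) \<le> _\<close> by linarith
      qed
      moreover have "(abs u2) \<noteq> 0 \<or> (abs u1) \<noteq> 0" using unz by blast
      ultimately show ?thesis unfolding K_def N_def by blast
    next
      case sp
      have N8: "N = 8" using sp N_def by simp
      have g6: "g 6 = g 2" using gf_sym[of 2 N r] N8 unfolding g_def by simp
      have AC: "A = C" unfolding A C using sp g6 by simp
      have Aeq: "A = g 0 + g 2" unfolding A using sp by simp
      have Beq: "B = g 2 + g 4" unfolding B using sp by simp
      have "2 * (abs u1) * (abs u2) \<le> (abs u1)\<^sup>2 + (abs u2)\<^sup>2"
        using sum_squares_bound[of "(abs u1)" "(abs u2)"] by (simp add: algebra_simps)
      hence "B * (2 * (abs u1) * (abs u2)) \<le> B * ((abs u1)\<^sup>2 + (abs u2)\<^sup>2)"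
        using Bpos by (intro mult_left_mono) auto
      hence "form2 A B C (abs u1) (abs u2) \<le> (A + B) * ((abs u1)\<^sup>2 + (abs u2)\<^sup>2)"
        unfolding form2_def AC by (simp add: algebra_simps)
      hence "2 * K * ((abs u1)\<^sup>2 + (abs u2)\<^sup>2) \<le> (A + B) * ((abs u1)\<^sup>2 + (abs u2)\<^sup>2)" using ineq by linarith
      moreover have "(abs u1)\<^sup>2 + (abs u2)\<^sup>2 > 0" using unz by (simp add: add_pos_nonneg sum_power2_gt_zero_iff)
      ultimately have KA: "2 * K \<le> A + B" by simp
      have g40: "g 4 \<le> g 0" using g0[of 4] N8 by simp
      have "2 * K * (1\<^sup>2 + 1\<^sup>2) \<le> form2 (Pq L r 1 1) (Pq L r 1 3) (Pq L r 3 3) 1 1"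
        unfolding form2_def P11 P13 P33 using KA Aeq Beq g40 by simp
      thus ?thesis unfolding K_def N_def by (intro exI[of _ 1] exI[of _ 1]) simp
    qed
  qed
qed



definition rho1 :: "real \<Rightarrow> real \<Rightarrow> real \<Rightarrow> real" where
  "rho1 a b c = (a + c) / 2 + sqrt (((a - c) / 2)\<^sup>2 + b\<^sup>2)"

lemma rho_bound: "form2 a b c x y \<le> rho1 a b c * (x\<^sup>2 + y\<^sup>2)"
proof -
  define s where "s = sqrt (((a - c) / 2)\<^sup>2 + b\<^sup>2)"
  define p where "p = rho1 a b c - a"
  define q where "q = rho1 a b c - c"
  have s0: "s \<ge> 0" unfolding s_def by simp
  have s2: "s\<^sup>2 = ((a - c) / 2)\<^sup>2 + b\<^sup>2" unfolding s_def by simp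
  have sge: "\<bar>(a - c) / 2\<bar> \<le> s" unfolding s_def
    by (rule real_le_rsqrt) (simp add: power_divide)
  have p: "p = (c - a) / 2 + s" unfolding p_def rho1_def s_def by (simp add: field_simps)
  have q: "q = (a - c) / 2 + s" unfolding q_def rho1_def s_def by (simp add: field_simps)
  have sa: "(a - c) / 2 \<le> s" "- ((a - c) / 2) \<le> s" using abs_le_D1[OF sge] abs_le_D2[OF sge] by auto
  have sa': "a - c \<le> 2 * s" "c - a \<le> 2 * s" using sa by (simp_all add: field_simps)
  have p0: "p \<ge> 0" using sa' unfolding p by (simp add: field_simps)
  have q0: "q \<ge> 0" using sa' unfolding q by (simp add: field_simps)
  define d where "d = (a - c) / 2"
  have p': "p = s - d" unfolding p d_def by (simp add: field_simps)
  have q': "q = s + d" unfolding q d_def by (simp add: field_simps)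
  have "p * q = s\<^sup>2 - d\<^sup>2" unfolding p' q' by (simp add: power2_eq_square algebra_simps)
  hence pq: "p * q = b\<^sup>2" using s2 unfolding d_def by simp
  have spq: "sqrt p * sqrt q = \<bar>b\<bar>" using pq p0 q0 by (simp add: real_sqrt_mult[symmetric])
  have "0 \<le> (sqrt p * \<bar>x\<bar> - sqrt q * \<bar>y\<bar>)\<^sup>2" by simp
  also have "\<dots> = p * x\<^sup>2 + q * y\<^sup>2 - 2 * (sqrt p * sqrt q) * (\<bar>x\<bar> * \<bar>y\<bar>)"
    using p0 q0 by (simp add: power2_eq_square algebra_simps)
  finally have h: "2 * \<bar>b\<bar> * (\<bar>x\<bar> * \<bar>y\<bar>) \<le> p * x\<^sup>2 + q * y\<^sup>2" unfolding spq by simp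
  have "b * x * y \<le> \<bar>b * x * y\<bar>" by (rule abs_ge_self)
  also have "\<bar>b * x * y\<bar> = \<bar>b\<bar> * (\<bar>x\<bar> * \<bar>y\<bar>)" by (simp add: abs_mult)
  finally have "2 * b * x * y \<le> 2 * \<bar>b\<bar> * (\<bar>x\<bar> * \<bar>y\<bar>)" by simp
  hence "form2 a b c x y \<le> a * x\<^sup>2 + c * y\<^sup>2 + p * x\<^sup>2 + q * y\<^sup>2"
    unfolding form2_def using h by linarith
  also have "\<dots> = rho1 a b c * (x\<^sup>2 + y\<^sup>2)" unfolding p_def q_def by (simp add: algebra_simps)
  finally show ?thesis .
qed

lemma rho_ge:
  assumes "x \<noteq> 0 \<or> y \<noteq> 0" "m * (x\<^sup>2 + y\<^sup>2) \<le> form2 a b c x y"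
  shows "m \<le> rho1 a b c"
proof -
  have pos: "x\<^sup>2 + y\<^sup>2 > 0" using assms(1) by (simp add: sum_power2_gt_zero_iff)
  have "m * (x\<^sup>2 + y\<^sup>2) \<le> rho1 a b c * (x\<^sup>2 + y\<^sup>2)" using assms(2) rho_bound order_trans by blast
  thus ?thesis using pos by simp
qed

lemma rho_det:
  assumes "rho1 a b c = 1"
  shows "b\<^sup>2 = (1 - a) * (1 - c)"
proof -
  have "sqrt (((a - c) / 2)\<^sup>2 + b\<^sup>2) = 1 - (a + c) / 2" using assms unfolding rho1_def by simp
  hence "(sqrt (((a - c) / 2)\<^sup>2 + b\<^sup>2))\<^sup>2 = (1 - (a + c) / 2)\<^sup>2" by simp
  hence "((a - c) / 2)\<^sup>2 + b\<^sup>2 = (1 - (a + c) / 2)\<^sup>2" by simp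
  thus ?thesis by (simp add: power2_eq_square field_simps)
qed

lemma rho_le1:
  assumes "0 \<le> a" "a \<le> 1/4" "0 \<le> b" "b \<le> 1/4" "0 \<le> c" "c \<le> 1/4"
  shows "rho1 a b c \<le> 1"
proof -
  have "((a - c) / 2)\<^sup>2 + b\<^sup>2 \<le> (1 - (a + c) / 2)\<^sup>2"
  proof -
    have "(1 - (a + c) / 2)\<^sup>2 - ((a - c) / 2)\<^sup>2 = (1 - a) * (1 - c)" by (simp add: power2_eq_square field_simps)
    moreover have "(1 - a) * (1 - c) \<ge> 3/4 * (3/4)" using assms by (intro mult_mono) auto
    moreover have "b * b \<le> 1/4 * (1/4)" using assms by (intro mult_mono) auto
    hence "b\<^sup>2 \<le> 1/4 * (1/4)" by (simp add: power2_eq_square)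
    ultimately show ?thesis by linarith
  qed
  hence "sqrt (((a - c) / 2)\<^sup>2 + b\<^sup>2) \<le> sqrt ((1 - (a + c) / 2)\<^sup>2)" by (rule real_sqrt_le_mono)
  also have "\<dots> = 1 - (a + c) / 2" using assms by simp
  finally show ?thesis unfolding rho1_def by simp
qed

lemma yfun_pos: "lam > 0 \<Longrightarrow> 0 < r \<Longrightarrow> r < 1 \<Longrightarrow> yfun lam r > 0"
proof -
  assume a: "lam > 0" "0 < r" "r < 1"
  have "yfun lam r = lam * (1 - r)\<^sup>2 / (4 * r)" unfolding yfun_def using a by (simp add: field_simps power2_eq_square)
  thus ?thesis using a by simp
qed

lemma yfun_mono:
  assumes lam: "lam > 0" and r: "0 < r1" "r1 \<le> r2" "r2 \<le> 1"
  shows "yfun lam r2 \<le> yfun lam r1"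
proof -
  have "r2 + 1 / r2 \<le> r1 + 1 / r1"
  proof -
    have "r1 + 1 / r1 - (r2 + 1 / r2) = (r2 - r1) * (1 - r1 * r2) / (r1 * r2)"
      using r by (simp add: field_simps)
    moreover have "r1 * r2 \<le> 1" by (rule mult_le_one) (use r in auto)
    ultimately have "r1 + 1 / r1 - (r2 + 1 / r2) \<ge> 0" using r by simp
    thus ?thesis by simp
  qed
  thus ?thesis unfolding yfun_def using lam by (simp add: mult_left_mono)
qed

lemma yfun_surj:
  assumes lam: "lam > 0" and y: "y > 0"
  shows "\<exists>r. 0 < r \<and> r < 1 \<and> yfun lam r = y"
proof -
  define \<beta> where "\<beta> = 2 + 4 * y / lam"
  have b2: "\<beta> > 2" unfolding \<beta>_def using lam y by simp
  have "2 * 2 \<le> \<beta> * \<beta>" using b2 by (intro mult_mono) auto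
  hence b4: "4 \<le> \<beta>\<^sup>2" by (simp add: power2_eq_square)
  define s where "s = sqrt (\<beta>\<^sup>2 - 4)"
  have s0: "s \<ge> 0" unfolding s_def using b4 by simp
  have s2: "s\<^sup>2 = \<beta>\<^sup>2 - 4" unfolding s_def using b4 by simp
  define r where "r = (\<beta> - s) / 2"
  have "s < \<beta>" proof -
    have "s\<^sup>2 < \<beta>\<^sup>2" using s2 by simp
    thus ?thesis using power_less_imp_less_base[of s 2 \<beta>] b2 by simp
  qed
  hence r0: "r > 0" unfolding r_def by simp
  have "\<beta> - 2 < s"
  proof -
    have "(\<beta> - 2)\<^sup>2 < s\<^sup>2" using s2 b2 by (simp add: power2_eq_square algebra_simps)
    thus ?thesis using power_less_imp_less_base[of "\<beta> - 2" 2 s] s0 by simp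
  qed
  hence r1: "r < 1" unfolding r_def by simp
  have "r * ((\<beta> + s) / 2) = 1" unfolding r_def using s2 by (simp add: power2_eq_square field_simps)
  hence h: "1 / r = (\<beta> + s) / 2" using r0 by (simp add: field_simps)
  have "r + 1 / r = (\<beta> - s) / 2 + (\<beta> + s) / 2" by (subst h) (simp add: r_def)
  also have "\<dots> = \<beta>" by (simp add: field_simps)
  finally have "r + 1 / r = \<beta>" .
  hence "yfun lam r = y" unfolding yfun_def \<beta>_def using lam by (simp add: field_simps)
  thus ?thesis using r0 r1 by blast
qed



definition aa :: "nat \<Rightarrow> real \<Rightarrow> real \<Rightarrow> real" where
  "aa L lam r = Pq L r 1 1 / (2 * kap lam (2 * (L - 1)) r)"
definition bb :: "nat \<Rightarrow> real \<Rightarrow> real \<Rightarrow> real" where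
  "bb L lam r = Pq L r 1 3 / (2 * kap lam (2 * (L - 1)) r)"
definition cc :: "nat \<Rightarrow> real \<Rightarrow> real \<Rightarrow> real" where
  "cc L lam r = Pq L r 3 3 / (2 * kap lam (2 * (L - 1)) r)"
definition Fr :: "nat \<Rightarrow> real \<Rightarrow> real \<Rightarrow> real" where
  "Fr L lam r = rho1 (aa L lam r) (bb L lam r) (cc L lam r)"

lemma cont_gf: "continuous_on S (\<lambda>r. gf N r t)"
  unfolding gf_def by (intro continuous_intros)

lemma cont_Pq: "continuous_on S (\<lambda>r. Pq L r s t)"
  unfolding Pq_def by (intro continuous_intros cont_gf)

lemma cont_kap: "0 \<notin> S \<Longrightarrow> continuous_on S (\<lambda>r. kap lam N r)"
  unfolding kap_def by (intro continuous_intros cont_gf) auto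

lemma cont_Fr:
  assumes L: "3 \<le> L" and lam: "lam > 0" and S: "\<And>r. r \<in> S \<Longrightarrow> 0 < r \<and> r < 1"
  shows "continuous_on S (Fr L lam)"
proof -
  have nz: "\<forall>r\<in>S. 2 * kap lam (2 * (L - 1)) r \<noteq> 0"
  proof
    fix r assume "r \<in> S"
    hence "0 < r" "r < 1" using S by auto
    moreover have "1 \<le> 2 * (L - 1)" using L by simp
    ultimately have "kap lam (2 * (L - 1)) r > 0" using kap_pos lam by blast
    thus "2 * kap lam (2 * (L - 1)) r \<noteq> 0" by simp
  qed
  have k: "continuous_on S (\<lambda>r. 2 * kap lam (2 * (L - 1)) r)"
    using S by (intro continuous_intros cont_kap) auto
  have "continuous_on S (\<lambda>r. Pq L r s t / (2 * kap lam (2 * (L - 1)) r))" for s t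
    by (rule continuous_on_divide[OF cont_Pq k nz])
  hence c: "continuous_on S (aa L lam)" "continuous_on S (bb L lam)" "continuous_on S (cc L lam)"
    unfolding aa_def[abs_def] bb_def[abs_def] cc_def[abs_def] by auto
  show ?thesis unfolding Fr_def[abs_def] rho1_def
    by (intro continuous_intros c) auto
qed



lemma kap_big:
  assumes r: "0 < r" "r \<le> 1/2" and rl: "128 * r \<le> lam" and N: "1 \<le> N"
  shows "kap lam N r \<ge> 8"
proof -
  have r1: "r < 1" using r by simp
  have lam: "lam > 0" using r rl by simp
  have "r ^ N \<le> r ^ 1" by (rule power_decreasing) (use N r in auto)
  hence h2: "1 - r ^ N \<ge> 1/2" using r by simp
  have h1: "1 / r - r \<ge> 1 / (2 * r)"
  proof -
    have "r * r \<le> (1/2) * (1/2)" using r by (intro mult_mono) auto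
    hence "2 * r * r \<le> 1" by simp
    hence "r \<le> 1 / (2 * r)" using r by (simp add: field_simps)
    thus ?thesis using r by (simp add: field_simps)
  qed
  have "(1 / r - r) * (1 - r ^ N) \<ge> 1 / (2 * r) * (1/2)"
    by (rule mult_mono) (use h1 h2 r in auto)
  hence "kap lam N r \<ge> lam / 4 * (1 / (2 * r) * (1/2))"
    unfolding kap_eq[OF r(1) r1 N] using lam by (intro mult_left_mono) auto
  moreover have "lam / 4 * (1 / (2 * r) * (1/2)) \<ge> 8" using r rl by (simp add: field_simps)
  ultimately show ?thesis by linarith
qed

lemma Pq_bounds: "0 < r \<Longrightarrow> r < 1 \<Longrightarrow> 0 \<le> Pq L r s t \<and> Pq L r s t \<le> 4"
  using gf_le2[of r "2 * (L - 1)"] gf_pos[of r "2 * (L - 1)"] unfolding Pq_def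
  by (smt (verit))

lemma Fr_small:
  assumes L: "3 \<le> L" and r: "0 < r" "r \<le> 1/2" and rl: "128 * r \<le> lam"
  shows "Fr L lam r \<le> 1"
proof -
  have K: "kap lam (2 * (L - 1)) r \<ge> 8" by (rule kap_big) (use r rl L in auto)
  have e: "\<And>s t. 0 \<le> Pq L r s t / (2 * kap lam (2 * (L - 1)) r) \<and> Pq L r s t / (2 * kap lam (2 * (L - 1)) r) \<le> 1/4"
  proof -
    fix s t
    have p: "0 \<le> Pq L r s t" "Pq L r s t \<le> 4" using Pq_bounds[of r L s t] r by auto
    show "0 \<le> Pq L r s t / (2 * kap lam (2 * (L - 1)) r) \<and> Pq L r s t / (2 * kap lam (2 * (L - 1)) r) \<le> 1/4"
      using p K by (simp add: field_simps)
  qed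
  show ?thesis unfolding Fr_def aa_def bb_def cc_def
    by (rule rho_le1) (use e in auto)
qed

lemma ivt_root:
  assumes L: "3 \<le> L" and lam: "lam > 0" and r: "0 < ry" "ry < 1" and F: "1 \<le> Fr L lam ry"
  shows "\<exists>r'. 0 < r' \<and> r' \<le> ry \<and> Fr L lam r' = 1"
proof -
  define rl where "rl = min ry (min (1/2) (lam / 128))"
  have rl0: "0 < rl" "rl \<le> ry" "rl \<le> 1/2" "128 * rl \<le> lam" using r lam unfolding rl_def by auto
  have "Fr L lam rl \<le> 1" by (rule Fr_small) (use rl0 L in auto)
  moreover have "continuous_on {rl..ry} (Fr L lam)"
    by (rule cont_Fr[OF L lam]) (use rl0 r in auto)
  ultimately obtain x where "rl \<le> x" "x \<le> ry" "Fr L lam x = 1"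
    using IVT'[of "Fr L lam" rl 1 ry] F rl0 by auto
  thus ?thesis using rl0 by (intro exI[of _ x]) auto
qed

definition Hent :: "nat \<Rightarrow> real \<Rightarrow> nat \<Rightarrow> nat \<Rightarrow> nat \<Rightarrow> real" where
  "Hent L lam k i j = (if i = j then dval L k i else 0) - lam * Pi_entry L i j"

lemma Hent_Aent:
  assumes i: "i \<in> {1..L}"
  shows "(\<Sum>j\<in>{1..L}. Hent L lam k i j * F j)
       = dval L k i * F i + y * F i - (\<Sum>j\<in>{1..L}. Aent L lam y i j * F j)"
proof -
  have d1: "(\<Sum>j\<in>{1..L}. (if i = j then dval L k i else 0) * F j) = dval L k i * F i"
  proof -
    have "(\<Sum>j\<in>{1..L}. (if i = j then dval L k i else 0) * F j) = (\<Sum>j\<in>{1..L}. if i = j then dval L k i * F j else 0)"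
      by (rule sum.cong) auto
    thus ?thesis using i by (simp add: sum.delta)
  qed
  have d2: "(\<Sum>j\<in>{1..L}. (if i = j then y else 0) * F j) = y * F i"
  proof -
    have "(\<Sum>j\<in>{1..L}. (if i = j then y else 0) * F j) = (\<Sum>j\<in>{1..L}. if i = j then y * F j else 0)"
      by (rule sum.cong) auto
    thus ?thesis using i by (simp add: sum.delta)
  qed
  have "(\<Sum>j\<in>{1..L}. Hent L lam k i j * F j)
     = (\<Sum>j\<in>{1..L}. (if i = j then dval L k i else 0) * F j) - (\<Sum>j\<in>{1..L}. lam * Pi_entry L i j * F j)"
  proof -
    have "(\<Sum>j\<in>{1..L}. Hent L lam k i j * F j)
      = (\<Sum>j\<in>{1..L}. (if i = j then dval L k i else 0) * F j - lam * Pi_entry L i j * F j)"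
      by (rule sum.cong) (auto simp: Hent_def left_diff_distrib)
    also have "\<dots> = (\<Sum>j\<in>{1..L}. (if i = j then dval L k i else 0) * F j) - (\<Sum>j\<in>{1..L}. lam * Pi_entry L i j * F j)"
      by (rule sum_subtractf)
    finally show ?thesis .
  qed
  moreover have "(\<Sum>j\<in>{1..L}. Aent L lam y i j * F j)
     = (\<Sum>j\<in>{1..L}. (if i = j then y else 0) * F j) + (\<Sum>j\<in>{1..L}. lam * Pi_entry L i j * F j)"
  proof -
    have "(\<Sum>j\<in>{1..L}. Aent L lam y i j * F j)
      = (\<Sum>j\<in>{1..L}. (if i = j then y else 0) * F j + lam * Pi_entry L i j * F j)"
      by (rule sum.cong) (auto simp: Aent_def distrib_right)
    also have "\<dots> = (\<Sum>j\<in>{1..L}. (if i = j then y else 0) * F j) + (\<Sum>j\<in>{1..L}. lam * Pi_entry L i j * F j)"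
      by (rule sum.distrib)
    finally show ?thesis .
  qed
  ultimately show ?thesis unfolding d1 d2 by simp
qed



lemma form2_scale: "m \<noteq> 0 \<Longrightarrow> form2 (a / m) (b / m) (c / m) x y = form2 a b c x y / m"
  unfolding form2_def by (simp add: field_simps)

lemma dval2:
  assumes L: "3 \<le> L" and i: "i \<in> {1..L}"
  shows "dval L 2 i = (if i = 1 then 1 else if i = 3 then 1 / (sg L 3)\<^sup>2 else 0)"
  using i L unfolding dval_def sg_def by auto

lemma H2_eigen:
  assumes L: "3 \<le> L" and lam: "lam > 0" and r: "0 < r" "r < 1" and F: "Fr L lam r = 1"
  shows "\<exists>\<Phi>. (\<exists>i\<in>{1..L}. \<Phi> i \<noteq> 0) \<and>
     (\<forall>i\<in>{1..L}. (\<Sum>j\<in>{1..L}. Hent L lam 2 i j * \<Phi> j) = yfun lam r * \<Phi> i)"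
proof -
  define K where "K = kap lam (2 * (L - 1)) r"
  have K: "K > 0" unfolding K_def using kap_pos[OF r _ lam, of "2 * (L - 1)"] L by auto
  define a where "a = aa L lam r"
  define b where "b = bb L lam r"
  define c where "c = cc L lam r"
  have det: "b\<^sup>2 = (1 - a) * (1 - c)" using rho_det F unfolding Fr_def a_def b_def c_def by blast
  define s3 where "s3 = sg L 3"
  have s3: "s3 > 0" unfolding s3_def using sg_pos by auto
  define c1 where "c1 = b"
  define c3 where "c3 = (1 - a) / s3"
  define \<Phi> where "\<Phi> j = c1 * Gm L lam r j 1 + c3 * Gm L lam r j 3" for j
  have sg1: "sg L 1 = 1" unfolding sg_def by simp
  have G11: "Gm L lam r 1 1 = a" unfolding Gm_Pq a_def aa_def K_def[symmetric] sg1 by simp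
  have G13: "Gm L lam r 1 3 = s3 * b" unfolding Gm_Pq b_def bb_def K_def[symmetric] sg1 s3_def by simp
  have G31: "Gm L lam r 3 1 = s3 * b" using G13 Gm_sym by metis
  have G33: "Gm L lam r 3 3 = s3 * s3 * c" unfolding Gm_Pq c_def cc_def K_def[symmetric] s3_def by simp
  have P1: "\<Phi> 1 = b" unfolding \<Phi>_def G11 G13 c1_def c3_def using s3 by (simp add: field_simps)
  have P3: "\<Phi> 3 = s3 * (1 - a)"
  proof -
    have "\<Phi> 3 = s3 * (b\<^sup>2 + (1 - a) * c)" unfolding \<Phi>_def G31 G33 c1_def c3_def using s3
      by (simp add: field_simps power2_eq_square)
    thus ?thesis unfolding det by (simp add: algebra_simps)
  qed
  have bpos: "b > 0"
  proof -
    have "Pq L r 1 3 > 0" unfolding Pq_def using gf_pos[OF r(1)] by (simp add: add_pos_pos)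
    thus ?thesis unfolding b_def bb_def using K K_def by simp
  qed
  have A: "(\<Sum>j\<in>{1..L}. Aent L lam (yfun lam r) i j * \<Phi> j)
      = c1 * (if i = 1 then 1 else 0) + c3 * (if i = 3 then 1 else 0)" if i: "i \<in> {1..L}" for i
  proof -
    have "(\<Sum>j\<in>{1..L}. Aent L lam (yfun lam r) i j * \<Phi> j)
       = c1 * (\<Sum>j\<in>{1..L}. Aent L lam (yfun lam r) i j * Gm L lam r j 1)
         + c3 * (\<Sum>j\<in>{1..L}. Aent L lam (yfun lam r) i j * Gm L lam r j 3)"
      unfolding \<Phi>_def by (simp add: sum_distrib_left sum.distrib algebra_simps)
    also have "\<dots> = c1 * (if i = 1 then 1 else 0) + c3 * (if i = 3 then 1 else 0)"
      using row_all[OF L lam r, of 1 i] row_all[OF L lam r, of 3 i] i L by auto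
    finally show ?thesis .
  qed
  have D: "dval L 2 i * \<Phi> i = c1 * (if i = 1 then 1 else 0) + c3 * (if i = 3 then 1 else 0)"
    if i: "i \<in> {1..L}" for i
  proof -
    consider "i = 1" | "i = 3" | "i \<noteq> 1" "i \<noteq> 3" by blast
    thus ?thesis
    proof cases
      case 1 thus ?thesis using dval2[OF L i] P1 c1_def by simp
    next
      case 2
      have d3: "dval L 2 3 = 1 / (s3 * s3)" using dval2[OF L i] 2 unfolding s3_def by (simp add: power2_eq_square)
      have "dval L 2 i * \<Phi> i = (1 - a) / s3" unfolding 2 d3 P3 using s3 by (simp add: field_simps)
      thus ?thesis using 2 c3_def by simp
    next
      case 3 thus ?thesis using dval2[OF L i] by simp
    qed
  qed
  have "\<forall>i\<in>{1..L}. (\<Sum>j\<in>{1..L}. Hent L lam 2 i j * \<Phi> j) = yfun lam r * \<Phi> i"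
  proof
    fix i assume i: "i \<in> {1..L}"
    show "(\<Sum>j\<in>{1..L}. Hent L lam 2 i j * \<Phi> j) = yfun lam r * \<Phi> i"
      unfolding Hent_Aent[OF i, of lam 2 \<Phi> "yfun lam r"] A[OF i] D[OF i] by simp
  qed
  moreover have "\<exists>i\<in>{1..L}. \<Phi> i \<noteq> 0" using P1 bpos L by (intro bexI[of _ 1]) auto
  ultimately show ?thesis by blast
qed

lemma Fr_ge_from_z:
  assumes L: "3 \<le> L" and lam: "lam > 0" and r: "0 < r" "r < 1"
    and z: "z1 \<noteq> 0 \<or> z3 \<noteq> 0"
    and ineq: "2 * kap lam (2 * (L - 1)) r * (z1\<^sup>2 + z3\<^sup>2) \<le> form2 (Pq L r 1 1) (Pq L r 1 3) (Pq L r 3 3) z1 z3"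
  shows "1 \<le> Fr L lam r"
proof -
  define K where "K = kap lam (2 * (L - 1)) r"
  have K: "K > 0" unfolding K_def using kap_pos[OF r _ lam, of "2 * (L - 1)"] L by auto
  have sc: "form2 (aa L lam r) (bb L lam r) (cc L lam r) z1 z3
     = form2 (Pq L r 1 1) (Pq L r 1 3) (Pq L r 3 3) z1 z3 / (2 * K)"
    unfolding aa_def bb_def cc_def K_def[symmetric] by (rule form2_scale) (use K in simp)
  have "1 * (z1\<^sup>2 + z3\<^sup>2) \<le> form2 (aa L lam r) (bb L lam r) (cc L lam r) z1 z3"
    unfolding sc using K ineq[folded K_def] by (simp add: pos_le_divide_eq mult.commute)
  thus ?thesis unfolding Fr_def by (rule rho_ge[OF z])
qed

lemma Fr_ge_r1:
  assumes L: "3 \<le> L" and lam: "lam > 0"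
  shows "\<exists>r. 0 < r \<and> r < 1 \<and> 1 \<le> Fr L lam r"
proof -
  define r where "r = (1 + lam) / (2 + lam)"
  have r: "0 < r" "r < 1" unfolding r_def using lam by auto
  define N where "N = 2 * (L - 1)"
  have N: "1 \<le> N" using L N_def by simp
  have "r ^ N < 1" using r N by (simp add: power_less_one_iff)
  have rN: "0 \<le> r ^ N" "r ^ N \<le> 1" using r by (auto intro: power_le_one)
  have h: "lam / 4 * (1 / r - r) \<le> 1"
  proof -
    have e: "lam / 4 * (1 / r - r) = lam * (3 + 2 * lam) / (4 * ((1 + lam) * (2 + lam)))"
      unfolding r_def using lam by (simp add: field_simps)
    have "lam * (3 + 2 * lam) \<le> 4 * ((1 + lam) * (2 + lam))"
      using lam mult_nonneg_nonneg[of lam lam] by (simp add: algebra_simps)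
    moreover have "4 * ((1 + lam) * (2 + lam)) > 0" using lam by simp
    ultimately show ?thesis unfolding e by (simp add: pos_divide_le_eq)
  qed
  have ir: "1 / r - r \<ge> 0" using r by (simp add: field_simps) (metis less_imp_le mult_le_one)
  have "kap lam N r \<le> lam / 4 * (1 / r - r)"
    unfolding kap_eq[OF r N] using lam ir rN by (simp add: mult_left_le)
  also have "\<dots> \<le> 1" by (rule h)
  also have "1 \<le> gf N r 0" unfolding gf_def using rN by simp
  finally have Kg: "2 * kap lam N r * (1\<^sup>2 + 0\<^sup>2) \<le> form2 (Pq L r 1 1) (Pq L r 1 3) (Pq L r 3 3) 1 0"
    unfolding form2_def Pq_def N_def absd_def by simp
  have "1 \<le> Fr L lam r" by (rule Fr_ge_from_z[OF L lam r, of 1 0]) (use Kg N_def in auto)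
  thus ?thesis using r by blast
qed



definition RM :: "nat \<Rightarrow> (nat \<Rightarrow> nat \<Rightarrow> real) \<Rightarrow> complex mat" where
  "RM L h = mat L L (\<lambda>(i, j). complex_of_real (h (i + 1) (j + 1)))"

lemma RM_carrier: "RM L h \<in> carrier_mat L L" unfolding RM_def by simp

lemma RM_mult:
  assumes v: "v \<in> carrier_vec L" and i: "i < L"
  shows "(RM L h *\<^sub>v v) $ i = (\<Sum>j<L. complex_of_real (h (i + 1) (j + 1)) * v $ j)"
proof -
  have "(RM L h *\<^sub>v v) $ i = row (RM L h) i \<bullet> v" using i by (simp add: RM_def)
  also have "\<dots> = (\<Sum>j\<in>{0..<L}. row (RM L h) i $ j * v $ j)" using v unfolding scalar_prod_def by simp
  also have "\<dots> = (\<Sum>j<L. complex_of_real (h (i + 1) (j + 1)) * v $ j)"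
    by (rule sum.cong) (use i in \<open>auto simp: RM_def row_def\<close>)
  finally show ?thesis .
qed

lemma real_part_eq:
  fixes L :: nat and h :: "nat \<Rightarrow> nat \<Rightarrow> real" and f :: "nat \<Rightarrow> real"
  assumes E: "\<And>i. i < L \<Longrightarrow> (\<Sum>j<L. h (i + 1) (j + 1) * f j) = x * f i"
  shows "\<forall>i\<in>{1..L}. (\<Sum>j\<in>{1..L}. h i j * f (j - 1)) = x * f (i - 1)"
proof
  fix i assume i: "i \<in> {1..L}"
  obtain i' where i': "i = Suc i'" "i' < L" using i by (cases i) auto
  have "(\<Sum>j\<in>{1..L}. h i j * f (j - 1)) = (\<Sum>j<L. h i (Suc j) * f j)"
    using sum.atLeast1_atMost_eq[of "\<lambda>j. h i j * f (j - 1)" L] by simp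
  also have "\<dots> = x * f i'" using E[OF i'(2)] i'(1) by simp
  finally show "(\<Sum>j\<in>{1..L}. h i j * f (j - 1)) = x * f (i - 1)" using i' by simp
qed

lemma ev_real:
  assumes ev: "eigenvalue (RM L h) (complex_of_real x)"
  shows "\<exists>w. (\<exists>i\<in>{1..L}. w i \<noteq> 0) \<and> (\<forall>i\<in>{1..L}. (\<Sum>j\<in>{1..L}. h i j * w j) = x * w i)"
proof -
  obtain v where v: "v \<in> carrier_vec L" "v \<noteq> 0\<^sub>v L" "RM L h *\<^sub>v v = complex_of_real x \<cdot>\<^sub>v v"
    using ev unfolding eigenvalue_def eigenvector_def by (auto simp: RM_def)
  have E: "(\<Sum>j<L. complex_of_real (h (i + 1) (j + 1)) * v $ j) = complex_of_real x * v $ i" if i: "i < L" for i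
  proof -
    have "(RM L h *\<^sub>v v) $ i = (complex_of_real x \<cdot>\<^sub>v v) $ i" using v(3) by simp
    thus ?thesis using RM_mult[OF v(1) i] v(1) i by simp
  qed
  have ER: "(\<Sum>j<L. h (i + 1) (j + 1) * Re (v $ j)) = x * Re (v $ i)" if i: "i < L" for i
    using arg_cong[OF E[OF i], of Re] by simp
  have EI: "(\<Sum>j<L. h (i + 1) (j + 1) * Im (v $ j)) = x * Im (v $ i)" if i: "i < L" for i
    using arg_cong[OF E[OF i], of Im] by simp
  obtain j0 where j0: "j0 < L" "v $ j0 \<noteq> 0"
  proof -
    have "\<not> (\<forall>j<L. v $ j = 0)"
    proof
      assume "\<forall>j<L. v $ j = 0"
      hence "v = 0\<^sub>v L" using v(1) by (intro eq_vecI) auto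
      thus False using v(2) by simp
    qed
    thus ?thesis using that by blast
  qed
  have jj: "Suc j0 \<in> {1..L}" "Suc j0 - 1 = j0" using j0 by auto
  show ?thesis
  proof (cases "Re (v $ j0) = 0")
    case False
    show ?thesis
      by (rule exI[of _ "\<lambda>s. Re (v $ (s - 1))"], rule conjI, rule bexI[of _ "Suc j0"])
         (use False jj real_part_eq[of L h "\<lambda>j. Re (v $ j)" x, OF ER] in auto)
  next
    case True
    hence "Im (v $ j0) \<noteq> 0" using j0(2) complex_eq_iff[of "v $ j0" 0] by auto
    thus ?thesis
      by (intro exI[of _ "\<lambda>s. Im (v $ (s - 1))"] conjI bexI[of _ "Suc j0"])
         (use jj real_part_eq[of L h "\<lambda>j. Im (v $ j)" x, OF EI] in auto)
  qed
qed

lemma real_ev: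
  assumes nz: "\<exists>i\<in>{1..L}. w i \<noteq> 0" and E: "\<forall>i\<in>{1..L}. (\<Sum>j\<in>{1..L}. h i j * w j) = x * w i"
  shows "eigenvalue (RM L h) (complex_of_real x)"
proof -
  define v where "v = vec L (\<lambda>j. complex_of_real (w (j + 1)))"
  have vc: "v \<in> carrier_vec L" unfolding v_def by simp
  have dv: "dim_vec v = L" unfolding v_def by simp
  obtain i0 where i0: "i0 \<in> {1..L}" "w i0 \<noteq> 0" using nz by blast
  have "v $ (i0 - 1) \<noteq> 0" using i0 unfolding v_def by auto
  hence vnz: "v \<noteq> 0\<^sub>v L" using i0 by auto
  have "RM L h *\<^sub>v v = complex_of_real x \<cdot>\<^sub>v v"
  proof (rule eq_vecI)
    fix i assume "i < dim_vec (complex_of_real x \<cdot>\<^sub>v v)"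
    hence i: "i < L" using vc by simp
    have "(RM L h *\<^sub>v v) $ i = (\<Sum>j<L. complex_of_real (h (i + 1) (j + 1)) * v $ j)" by (rule RM_mult[OF vc i])
    also have "\<dots> = complex_of_real (\<Sum>j<L. h (i + 1) (Suc j) * w (Suc j))"
      unfolding v_def by (simp add: of_real_sum)
    also have "(\<Sum>j<L. h (i + 1) (Suc j) * w (Suc j)) = (\<Sum>j\<in>{1..L}. h (i + 1) j * w j)"
      using sum.atLeast1_atMost_eq[of "\<lambda>j. h (i + 1) j * w j" L] by simp
    also have "\<dots> = x * w (i + 1)" using E i by auto
    finally show "(RM L h *\<^sub>v v) $ i = (complex_of_real x \<cdot>\<^sub>v v) $ i" using i vc unfolding v_def by simp
  qed (simp add: RM_def dv)
  thus ?thesis unfolding eigenvalue_def eigenvector_def using vc vnz by (auto simp: RM_def)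
qed

lemma S_finite: "finite {x :: real. eigenvalue (RM L h) (complex_of_real x)}"
proof -
  define p where "p = char_poly (RM L h)"
  have "coeff p L = 1" unfolding p_def using degree_monic_char_poly[OF RM_carrier] by simp
  hence p0: "p \<noteq> 0" by auto
  have "{x :: real. eigenvalue (RM L h) (complex_of_real x)} \<subseteq> Re ` {z. poly p z = 0}"
  proof
    fix x assume "x \<in> {x :: real. eigenvalue (RM L h) (complex_of_real x)}"
    hence "poly p (complex_of_real x) = 0" unfolding p_def using eigenvalue_root_char_poly[OF RM_carrier] by auto
    thus "x \<in> Re ` {z. poly p z = 0}" by (intro image_eqI[of _ _ "complex_of_real x"]) auto
  qed
  moreover have "finite (Re ` {z. poly p z = 0})" using poly_roots_finite[OF p0] by simp
  ultimately show ?thesis by (rule finite_subset)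
qed

lemma S_nonempty:
  assumes L: "L > 0" and sym: "\<And>i j. h i j = h j i"
  shows "\<exists>x :: real. eigenvalue (RM L h) (complex_of_real x)"
proof -
  obtain as where as: "char_poly (RM L h) = (\<Prod>a\<leftarrow>as. [:- a, 1:])" "length as = L"
    using char_poly_factorized[OF RM_carrier] by blast
  then obtain a as' where "as = a # as'" using L by (cases as) auto
  hence "poly (char_poly (RM L h)) a = 0" unfolding as(1) by (simp add: poly_prod_list)
  hence ev: "eigenvalue (RM L h) a" using eigenvalue_root_char_poly[OF RM_carrier] by auto
  obtain v where v: "v \<in> carrier_vec L" "v \<noteq> 0\<^sub>v L" "RM L h *\<^sub>v v = a \<cdot>\<^sub>v v"
    using ev unfolding eigenvalue_def eigenvector_def by (auto simp: RM_def)
  define H where "H i j = complex_of_real (h (i + 1) (j + 1))" for i j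
  have Hs: "H i j = H j i" for i j unfolding H_def using sym by simp
  have E: "(\<Sum>j<L. H i j * v $ j) = a * v $ i" if i: "i < L" for i
  proof -
    have "(RM L h *\<^sub>v v) $ i = (a \<cdot>\<^sub>v v) $ i" using v(3) by simp
    thus ?thesis using RM_mult[OF v(1) i] v(1) i unfolding H_def by simp
  qed
  define Q where "Q = (\<Sum>i<L. cnj (v $ i) * (\<Sum>j<L. H i j * v $ j))"
  define n where "n = (\<Sum>i<L. (norm (v $ i))\<^sup>2)"
  have Qa: "Q = a * complex_of_real n"
  proof -
    have "Q = (\<Sum>i<L. a * complex_of_real ((norm (v $ i))\<^sup>2))" unfolding Q_def
    proof (rule sum.cong)
      fix i assume "i \<in> {..<L}"
      hence "cnj (v $ i) * (\<Sum>j<L. H i j * v $ j) = a * (v $ i * cnj (v $ i))" using E by (simp add: mult_ac)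
      also have "\<dots> = a * complex_of_real ((norm (v $ i))\<^sup>2)" by (simp only: complex_norm_square[symmetric])
      finally show "cnj (v $ i) * (\<Sum>j<L. H i j * v $ j) = a * complex_of_real ((norm (v $ i))\<^sup>2)" .
    qed simp
    also have "\<dots> = a * complex_of_real n" unfolding n_def
      by (simp only: of_real_sum sum_distrib_left)
    finally show ?thesis .
  qed
  have Qc: "cnj Q = Q"
  proof -
    have "cnj Q = (\<Sum>i<L. \<Sum>j<L. v $ i * H i j * cnj (v $ j))"
      unfolding Q_def H_def by (simp add: sum_distrib_left mult_ac)
    also have "\<dots> = (\<Sum>j<L. \<Sum>i<L. v $ i * H i j * cnj (v $ j))" by (rule sum.swap)
    also have "\<dots> = Q" unfolding Q_def by (simp add: sum_distrib_left Hs mult_ac)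
    finally show ?thesis .
  qed
  have "Im Q = 0" using Qc complex_eq_iff[of "cnj Q" Q] by simp
  moreover have n0: "n > 0"
  proof -
    obtain j0 where j0: "j0 < L" "v $ j0 \<noteq> 0"
    proof -
      have "\<not> (\<forall>j<L. v $ j = 0)"
      proof
        assume "\<forall>j<L. v $ j = 0"
        hence "v = 0\<^sub>v L" using v(1) by (intro eq_vecI) auto
        thus False using v(2) by simp
      qed
      thus ?thesis using that by blast
    qed
    have "(norm (v $ j0))\<^sup>2 \<le> n" unfolding n_def
      by (rule member_le_sum) (use j0 in auto)
    moreover have "(norm (v $ j0))\<^sup>2 > 0" using j0 by simp
    ultimately show ?thesis by linarith
  qed
  ultimately have "Im a = 0" unfolding Qa by simp
  hence "complex_of_real (Re a) = a" by (simp add: complex_eq_iff)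
  thus ?thesis using ev by metis
qed



lemma Piph_dval:
  assumes L: "3 \<le> L" and k: "k \<in> {1..L}" and a: "\<forall>i\<in>{1..L}. a i = (if i = k then 1 else 0)"
    and t: "t \<in> {1..L}"
  shows "Piph_diag L a t = dval L k t"
proof -
  have a2: "a 2 = (if 2 = k then 1 else 0)" using a L by auto
  have aL: "a (L - 1) = (if L - 1 = k then 1 else 0)" using a L by auto
  have s2: "(sqrt 2)\<^sup>2 = (2::real)" by simp
  consider "t = 1" | "t = L" | "2 \<le> t" "t \<le> L - 1" using t by force
  thus ?thesis
  proof cases
    case 1
    thus ?thesis unfolding Piph_diag_def dval_def delta_def sg_def a2 using k by auto
  next
    case 2
    hence "t \<noteq> 1" using L by simp
    thus ?thesis unfolding Piph_diag_def dval_def delta_def sg_def aL using 2 L k by auto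
  next
    case 3
    have "t - 1 \<in> {1..L}" "t + 1 \<in> {1..L}" using 3 by auto
    hence am: "a (t - 1) = (if t - 1 = k then 1 else 0)" "a (t + 1) = (if t + 1 = k then 1 else 0)"
      using bspec[OF a] by auto
    have ne: "t \<noteq> 1" "t \<noteq> L" using 3 L by auto
    show ?thesis unfolding Piph_diag_def dval_def delta_def sg_def am using 3 ne k s2 by auto
  qed
qed

lemma mat_eq:
  assumes L: "3 \<le> L" and k: "k \<in> {1..L}" and a: "\<forall>i\<in>{1..L}. a i = (if i = k then 1 else 0)"
  shows "Piph_mat L a - complex_of_real lam \<cdot>\<^sub>m Pi_mat L = RM L (Hent L lam k)"
proof (rule eq_matI)
  fix i j assume "i < dim_row (RM L (Hent L lam k))" "j < dim_col (RM L (Hent L lam k))"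
  hence ij: "i < L" "j < L" unfolding RM_def by auto
  have "Piph_diag L a (i + 1) = dval L k (i + 1)" by (rule Piph_dval[OF L k a]) (use ij in auto)
  thus "(Piph_mat L a - complex_of_real lam \<cdot>\<^sub>m Pi_mat L) $$ (i, j) = RM L (Hent L lam k) $$ (i, j)"
    using ij unfolding Piph_mat_def Pi_mat_def RM_def Hent_def by auto
qed (auto simp: Piph_mat_def Pi_mat_def RM_def)

lemma Hent_sym: "Hent L lam k i j = Hent L lam k j i"
  unfolding Hent_def using Pi_sym by auto

lemma H2_in_S:
  assumes L: "3 \<le> L" and lam: "lam > 0" and r: "0 < r" "r < 1" and F: "Fr L lam r = 1"
  shows "eigenvalue (RM L (Hent L lam 2)) (complex_of_real (yfun lam r))"
  using H2_eigen[OF L lam r F] real_ev by blast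

lemma from_root:
  assumes L: "3 \<le> L" and lam: "lam > 0" and r: "0 < ry" "ry < 1" and F: "1 \<le> Fr L lam ry"
  shows "\<exists>x. eigenvalue (RM L (Hent L lam 2)) (complex_of_real x) \<and> yfun lam ry \<le> x"
proof -
  obtain r' where r': "0 < r'" "r' \<le> ry" "Fr L lam r' = 1" using ivt_root[OF L lam r F] by blast
  have "eigenvalue (RM L (Hent L lam 2)) (complex_of_real (yfun lam r'))"
    by (rule H2_in_S[OF L lam _ _ r'(3)]) (use r' r in auto)
  moreover have "yfun lam ry \<le> yfun lam r'" by (rule yfun_mono) (use r' r lam in auto)
  ultimately show ?thesis by blast
qed

lemma main_k:
  assumes L: "3 \<le> L" and lam: "lam > 0" and k: "k \<in> {1..L}"
  shows "largest_eigenvalue (RM L (Hent L lam k)) \<le> largest_eigenvalue (RM L (Hent L lam 2))"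
proof -
  define Sk where "Sk = {x :: real. eigenvalue (RM L (Hent L lam k)) (complex_of_real x)}"
  define S2 where "S2 = {x :: real. eigenvalue (RM L (Hent L lam 2)) (complex_of_real x)}"
  have fk: "finite Sk" unfolding Sk_def by (rule S_finite)
  have f2: "finite S2" unfolding S2_def by (rule S_finite)
  have nek: "Sk \<noteq> {}" unfolding Sk_def using S_nonempty[of L "Hent L lam k"] L Hent_sym by auto
  define y where "y = Max Sk"
  have yS: "y \<in> Sk" unfolding y_def using fk nek by (rule Max_in)
  have "\<exists>x\<in>S2. y \<le> x"
  proof (cases "k = 2")
    case True thus ?thesis using yS unfolding Sk_def S2_def by blast
  next
    case k2: False
    show ?thesis
    proof (cases "y > 0")
      case False
      obtain r1 where r1: "0 < r1" "r1 < 1" "1 \<le> Fr L lam r1" using Fr_ge_r1[OF L lam] by blast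
      obtain x where x: "eigenvalue (RM L (Hent L lam 2)) (complex_of_real x)" "yfun lam r1 \<le> x"
        using from_root[OF L lam r1] by blast
      have "yfun lam r1 > 0" using yfun_pos[OF lam r1(1,2)] .
      thus ?thesis using x False unfolding S2_def by (intro bexI[of _ x]) auto
    next
      case True
      obtain ry where ry: "0 < ry" "ry < 1" "yfun lam ry = y" using yfun_surj[OF lam True] by blast
      obtain w where w: "\<exists>i\<in>{1..L}. w i \<noteq> 0"
        "\<forall>i\<in>{1..L}. (\<Sum>j\<in>{1..L}. Hent L lam k i j * w j) = y * w i"
        using ev_real[of L "Hent L lam k" y] yS unfolding Sk_def by blast
      have eq: "(\<Sum>j\<in>{1..L}. Aent L lam (yfun lam ry) i j * w j) = dval L k i * w i" if i: "i \<in> {1..L}" for i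
        using Hent_Aent[OF i, of lam k w "yfun lam ry"] w(2) i ry(3) by auto
      obtain z1 z3 where z: "z1 \<noteq> 0 \<or> z3 \<noteq> 0"
        "2 * kap lam (2 * (L - 1)) ry * (z1\<^sup>2 + z3\<^sup>2) \<le> form2 (Pq L ry 1 1) (Pq L ry 1 3) (Pq L ry 3 3) z1 z3"
        using config_z[OF L lam ry(1,2), of k w] k k2 eq w(1) by auto
      have "1 \<le> Fr L lam ry" by (rule Fr_ge_from_z[OF L lam ry(1,2) z])
      then obtain x where x: "eigenvalue (RM L (Hent L lam 2)) (complex_of_real x)" "yfun lam ry \<le> x"
        using from_root[OF L lam ry(1,2)] by blast
      thus ?thesis using ry(3) unfolding S2_def by blast
    qed
  qed
  then obtain x where x: "x \<in> S2" "y \<le> x" by blast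
  have "x \<le> Max S2" using f2 x(1) by (rule Max_ge)
  thus ?thesis using x(2) unfolding largest_eigenvalue_def y_def Sk_def S2_def by simp
qed

theorem theorem3:
  fixes L :: nat and lam :: real
  assumes "L \<ge> 3" and "lam > 0"
  shows "\<forall>a. is_bitstring L a \<and> wt L a = 1 \<longrightarrow>
     largest_eigenvalue (Piph_mat L a - complex_of_real lam \<cdot>\<^sub>m Pi_mat L)
       \<le> largest_eigenvalue (Piph_mat L (\<lambda>i. if i = 2 then 1 else 0) - complex_of_real lam \<cdot>\<^sub>m Pi_mat L)"
proof (intro allI impI)
  fix a assume a: "is_bitstring L a \<and> wt L a = 1"
  have "card {i \<in> {1..L}. a i = 1} = 1" using a unfolding wt_def by simp
  then obtain k where kk: "{i \<in> {1..L}. a i = 1} = {k}" by (rule card_1_singletonE)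
  have k: "k \<in> {1..L}" using kk by auto
  have ak: "\<forall>i\<in>{1..L}. a i = (if i = k then 1 else 0)"
  proof
    fix i assume i: "i \<in> {1..L}"
    have "a i \<in> {0, 1}" using a i unfolding is_bitstring_def by auto
    moreover have "a i = 1 \<longleftrightarrow> i = k" using kk i by auto
    ultimately show "a i = (if i = k then 1 else 0)" by auto
  qed
  have e2: "\<forall>i\<in>{1..L}. (\<lambda>i. if i = 2 then 1 else 0) i = (if i = 2 then (1::nat) else 0)" by simp
  have two: "(2::nat) \<in> {1..L}" using assms by simp
  show "largest_eigenvalue (Piph_mat L a - complex_of_real lam \<cdot>\<^sub>m Pi_mat L)
       \<le> largest_eigenvalue (Piph_mat L (\<lambda>i. if i = 2 then 1 else 0) - complex_of_real lam \<cdot>\<^sub>m Pi_mat L)"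
    unfolding mat_eq[OF assms(1) k ak] mat_eq[OF assms(1) two e2]
    by (rule main_k[OF assms k])
qed


end
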